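(* Let $A=A_1A_2A_3$ and $B=B_1B_2B_3$ be triangles in the real projective plane that are perspective from a line $s$: for each permutation $(i,j,k)$ of $(1,2,3)$ the point $L_i=A_kA_j\cap B_kB_j$ lies on $s$. For each permutation $(i,j,k)$ of $(1,2,3)$ let $C_k=A_iB_j\cap A_jB_i$ (assuming general position so that these points are well defined). Then the triangle $C=C_1C_2C_3$ is perspective from the line $s$ to both $A$ and $B$; i.e., for each permutation $(i,j,k)$ the lines $C_iC_j$, $A_iA_j$, $B_iB_j$ all pass through the point $L_k\in s$.
   Context: Two configurations with a correspondence between their lines are perspective from a line $\ell$ if all intersection points of corresponding lines lie on $\ell$; for triangles the correspondence is $A_iA_j\leftrightarrow B_iB_j\leftrightarrow C_iC_j$. *)

theory Defs
  imports "HOL-Analysis.Analysis" "HOL-Analysis.Cross3"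
begin

text \<open>Real projective plane via homogeneous coordinates: points and lines are
  nonzero vectors of real^3 (up to nonzero scalars).\<close>

definition pt :: "real^3 \<Rightarrow> bool" where
  "pt p \<longleftrightarrow> p \<noteq> 0"

definition proj_eq :: "real^3 \<Rightarrow> real^3 \<Rightarrow> bool" where
  "proj_eq p q \<longleftrightarrow> cross3 p q = 0"

definition join :: "real^3 \<Rightarrow> real^3 \<Rightarrow> real^3" where
  "join p q = cross3 p q"

definition meet :: "real^3 \<Rightarrow> real^3 \<Rightarrow> real^3" where
  "meet l m = cross3 l m"

definition incident :: "real^3 \<Rightarrow> real^3 \<Rightarrow> bool" where
  "incident p l \<longleftrightarrow> p \<bullet> l = 0"

definition collinear3 :: "real^3 \<Rightarrow> real^3 \<Rightarrow> real^3 \<Rightarrow> bool" where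
  "collinear3 p q r \<longleftrightarrow> p \<bullet> cross3 q r = 0"

definition triangle :: "real^3 \<Rightarrow> real^3 \<Rightarrow> real^3 \<Rightarrow> bool" where
  "triangle p q r \<longleftrightarrow> pt p \<and> pt q \<and> pt r \<and> \<not> collinear3 p q r"

end

theory Submission
  imports Defs
begin

unbundle cross3_syntax

lemma id_det: fixes A1 A2 A3 B1 B2 B3 :: "real^3" shows "((A3\<times>A2)\<times>(B3\<times>B2)) \<bullet> (((A1\<times>A3)\<times>(B1\<times>B3)) \<times> ((A2\<times>A1)\<times>(B2\<times>B1)))
  = (A1 \<bullet> (A2\<times>A3)) * (B1 \<bullet> (B2\<times>B3)) * ((A1\<times>B1) \<bullet> ((A2\<times>B2)\<times>(A3\<times>B3)))"
  unfolding cross3_def inner_vec_def sum_3 vector_def by (simp; algebra)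

lemma id_C: fixes A1 A2 A3 B1 B2 B3 :: "real^3" shows "((A2\<times>A1)\<times>(B2\<times>B1)) \<bullet> (((A2\<times>B3)\<times>(A3\<times>B2)) \<times> ((A3\<times>B1)\<times>(A1\<times>B3)))
  = ((A1\<times>B1) \<bullet> ((A2\<times>B2)\<times>(A3\<times>B3))) * (A1 \<bullet> (A2\<times>B3)) * (B1 \<bullet> (B2\<times>A3))"
  unfolding cross3_def inner_vec_def sum_3 vector_def by (simp; algebra)

lemma id_P_cyc: fixes A1 A2 A3 B1 B2 B3 :: "real^3" shows
  "(A2\<times>B2) \<bullet> ((A3\<times>B3)\<times>(A1\<times>B1)) = (A1\<times>B1) \<bullet> ((A2\<times>B2)\<times>(A3\<times>B3))"
  by (metis cross_triple inner_commute)

lemma id_s: fixes L1 L2 L3 s :: "real^3" shows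
  "(L1 \<bullet> (L2 \<times> L3)) *\<^sub>R s = (s \<bullet> L1) *\<^sub>R (L2 \<times> L3) + (s \<bullet> L2) *\<^sub>R (L3 \<times> L1) + (s \<bullet> L3) *\<^sub>R (L1 \<times> L2)"
  unfolding cross3_def inner_vec_def sum_3 vector_def vec_eq_iff
  by (auto simp: forall_3 algebra_simps)

lemma det_zero: fixes L1 L2 L3 s :: "real^3"
  assumes "s \<noteq> 0" "L1 \<bullet> s = 0" "L2 \<bullet> s = 0" "L3 \<bullet> s = 0"
  shows "L1 \<bullet> (L2 \<times> L3) = 0"
proof -
  have "(L1 \<bullet> (L2 \<times> L3)) *\<^sub>R s = 0" using id_s[of L1 L2 L3 s] assms
    by (simp add: inner_commute)
  then show ?thesis using assms(1) by simp
qed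


theorem theorem4:
  fixes A1 A2 A3 B1 B2 B3 s :: "real^3"
  assumes triA: "triangle A1 A2 A3"
    and triB: "triangle B1 B2 B3"
    and s_line: "s \<noteq> 0"
    \<comment> \<open>general position: the lines A_jA_k and B_jB_k are distinct, so L_i is well defined\<close>
    and gp_L1: "\<not> proj_eq (join A2 A3) (join B2 B3)"
    and gp_L2: "\<not> proj_eq (join A3 A1) (join B3 B1)"
    and gp_L3: "\<not> proj_eq (join A1 A2) (join B1 B2)"
    \<comment> \<open>perspective from the line s\<close>
    and persp1: "incident (meet (join A3 A2) (join B3 B2)) s"
    and persp2: "incident (meet (join A1 A3) (join B1 B3)) s"
    and persp3: "incident (meet (join A2 A1) (join B2 B1)) s"
    \<comment> \<open>general position: C_k = A_iB_j \<inter> A_jB_i is well defined\<close>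
    and gp_AB12: "\<not> proj_eq A1 B2" and gp_AB21: "\<not> proj_eq A2 B1"
    and gp_AB13: "\<not> proj_eq A1 B3" and gp_AB31: "\<not> proj_eq A3 B1"
    and gp_AB23: "\<not> proj_eq A2 B3" and gp_AB32: "\<not> proj_eq A3 B2"
    and gp_C1: "\<not> proj_eq (join A2 B3) (join A3 B2)"
    and gp_C2: "\<not> proj_eq (join A3 B1) (join A1 B3)"
    and gp_C3: "\<not> proj_eq (join A1 B2) (join A2 B1)"
  shows
    "let L1 = meet (join A3 A2) (join B3 B2);
         L2 = meet (join A1 A3) (join B1 B3);
         L3 = meet (join A2 A1) (join B2 B1);
         C1 = meet (join A2 B3) (join A3 B2);
         C2 = meet (join A3 B1) (join A1 B3);
         C3 = meet (join A1 B2) (join A2 B1)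
     in incident L3 (join C1 C2) \<and> incident L3 (join A1 A2) \<and> incident L3 (join B1 B2) \<and>
        incident L1 (join C2 C3) \<and> incident L1 (join A2 A3) \<and> incident L1 (join B2 B3) \<and>
        incident L2 (join C3 C1) \<and> incident L2 (join A3 A1) \<and> incident L2 (join B3 B1) \<and>
        incident L1 s \<and> incident L2 s \<and> incident L3 s"
proof -
  define P where "P = (A1\<times>B1) \<bullet> ((A2\<times>B2)\<times>(A3\<times>B3))"
  have dA: "A1 \<bullet> (A2\<times>A3) \<noteq> 0" using triA by (simp add: triangle_def collinear3_def)
  have dB: "B1 \<bullet> (B2\<times>B3) \<noteq> 0" using triB by (simp add: triangle_def collinear3_def)
  have "((A3\<times>A2)\<times>(B3\<times>B2)) \<bullet> (((A1\<times>A3)\<times>(B1\<times>B3)) \<times> ((A2\<times>A1)\<times>(B2\<times>B1))) = 0"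
    using det_zero[OF s_line] persp1 persp2 persp3 by (simp add: incident_def meet_def join_def)
  hence P0: "P = 0" using id_det[of A3 A2 B3 B2 A1 B1] dA dB unfolding P_def by simp
  have P2: "(A2\<times>B2) \<bullet> ((A3\<times>B3)\<times>(A1\<times>B1)) = 0" using P0 id_P_cyc P_def by metis
  have P3: "(A3\<times>B3) \<bullet> ((A1\<times>B1)\<times>(A2\<times>B2)) = 0" using P2 id_P_cyc by metis
  have c3: "((A2\<times>A1)\<times>(B2\<times>B1)) \<bullet> (((A2\<times>B3)\<times>(A3\<times>B2)) \<times> ((A3\<times>B1)\<times>(A1\<times>B3))) = 0"
    using id_C[of A2 A1 B2 B1 B3 A3] P0 unfolding P_def by (metis mult_zero_left)
  have c1: "((A3\<times>A2)\<times>(B3\<times>B2)) \<bullet> (((A3\<times>B1)\<times>(A1\<times>B3)) \<times> ((A1\<times>B2)\<times>(A2\<times>B1))) = 0"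
    using id_C[of A3 A2 B3 B2 B1 A1] P2 by (metis mult_zero_left)
  have c2: "((A1\<times>A3)\<times>(B1\<times>B3)) \<bullet> (((A1\<times>B2)\<times>(A2\<times>B1)) \<times> ((A2\<times>B3)\<times>(A3\<times>B2))) = 0"
    using id_C[of A1 A3 B1 B3 B2 A2] P3 by (metis mult_zero_left)
  have "((A2\<times>A1)\<times>(B2\<times>B1)) \<bullet> (A1\<times>A2) = 0" "((A2\<times>A1)\<times>(B2\<times>B1)) \<bullet> (B1\<times>B2) = 0"
    "((A3\<times>A2)\<times>(B3\<times>B2)) \<bullet> (A2\<times>A3) = 0" "((A3\<times>A2)\<times>(B3\<times>B2)) \<bullet> (B2\<times>B3) = 0"
    "((A1\<times>A3)\<times>(B1\<times>B3)) \<bullet> (A3\<times>A1) = 0" "((A1\<times>A3)\<times>(B1\<times>B3)) \<bullet> (B3\<times>B1) = 0"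
    by (metis cross_skew dot_cross_self inner_minus_right neg_equal_0_iff_equal)+
  then show ?thesis
    using c1 c2 c3 persp1 persp2 persp3
    unfolding Let_def incident_def meet_def join_def by blast
qed
end
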